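(* Let $R$ be a ring and $I$ a nilpotent ideal of $R$. If $R/I$ is almost Armendariz, then $R$ is almost Armendariz.
   Context: All rings are associative with identity. For a ring $R$, $P(R)$ denotes the prime radical of $R$ (the intersection of all prime ideals of $R$, equivalently the set of strongly nilpotent elements of $R$). A ring $R$ is called almost Armendariz if whenever $f(x)=\sum_{i=0}^m a_ix^i$ and $g(x)=\sum_{j=0}^n b_jx^j\in R[x]$ satisfy $f(x)g(x)=0$, then $a_ib_j\in P(R)$ for all $0\le i\le m$, $0\le j\le n$. *)

theory Defs
  imports "HOL-Algebra.UnivPoly" "HOL-Algebra.QuotRing"
begin

(* Prime ideal of a (not necessarily commutative) ring with identity:
   a proper ideal P such that for all ideals A, B with AB \<subseteq> P,
   A \<subseteq> P or B \<subseteq> P.  (AB \<subseteq> P iff all products a b lie in P, since P is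
   closed under finite sums.) *)
definition nc_prime_ideal :: "'a set \<Rightarrow> ('a, 'b) ring_scheme \<Rightarrow> bool" where
  "nc_prime_ideal P R \<longleftrightarrow> ideal P R \<and> P \<noteq> carrier R \<and>
     (\<forall>A B. ideal A R \<longrightarrow> ideal B R \<longrightarrow>
        (\<forall>a\<in>A. \<forall>b\<in>B. a \<otimes>\<^bsub>R\<^esub> b \<in> P) \<longrightarrow> A \<subseteq> P \<or> B \<subseteq> P)"

definition prime_radical :: "('a, 'b) ring_scheme \<Rightarrow> 'a set" where
  "prime_radical R = {x \<in> carrier R. \<forall>P. nc_prime_ideal P R \<longrightarrow> x \<in> P}"

(* nilpotent ideal: I^n = 0 for some n \<ge> 1, i.e. every product of n elements of I is 0 *)
definition nilpotent_ideal :: "'a set \<Rightarrow> ('a, 'b) ring_scheme \<Rightarrow> bool" where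
  "nilpotent_ideal I R \<longleftrightarrow> ideal I R \<and> (\<exists>n::nat. n \<ge> 1 \<and>
     (\<forall>xs. length xs = n \<longrightarrow> set xs \<subseteq> I \<longrightarrow>
        foldr (\<lambda>x y. x \<otimes>\<^bsub>R\<^esub> y) xs \<one>\<^bsub>R\<^esub> = \<zero>\<^bsub>R\<^esub>))"

definition almost_armendariz :: "('a, 'b) ring_scheme \<Rightarrow> bool" where
  "almost_armendariz R \<longleftrightarrow>
     (\<forall>f \<in> carrier (UP R). \<forall>g \<in> carrier (UP R).
        f \<otimes>\<^bsub>UP R\<^esub> g = \<zero>\<^bsub>UP R\<^esub> \<longrightarrow>
        (\<forall>i j. coeff (UP R) f i \<otimes>\<^bsub>R\<^esub> coeff (UP R) g j \<in> prime_radical R))"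

end

theory Submission imports Defs begin

lemma (in ring) elem_prime:
  assumes P: "nc_prime_ideal P R" and a: "a \<in> carrier R" and b: "b \<in> carrier R"
    and h: "\<And>r. r \<in> carrier R \<Longrightarrow> a \<otimes> r \<otimes> b \<in> P"
  shows "a \<in> P \<or> b \<in> P"
proof -
  have iP: "ideal P R" using P unfolding nc_prime_ideal_def by (elim conjE)
  interpret iP: ideal P R by (rule iP)
  have z: "\<zero> \<in> P" by (rule iP.additive_subgroup_axioms[THEN additive_subgroup.zero_closed])
  define B where "B = {y \<in> carrier R. \<forall>r\<in>carrier R. a \<otimes> r \<otimes> y \<in> P}"
  define A where "A = {x \<in> carrier R. \<forall>y\<in>B. x \<otimes> y \<in> P}"
  have iB: "ideal B R"
  proof (rule idealI)
    show "ring R" by (rule ring_axioms)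
    show "subgroup B (add_monoid R)"
    proof (rule add.subgroupI)
      show "B \<subseteq> carrier R" unfolding B_def by blast
      have "\<zero> \<in> B" unfolding B_def using a z by simp
      then show "B \<noteq> {}" by blast
    next
      fix x assume x: "x \<in> B"
      then have xc: "x \<in> carrier R" unfolding B_def by blast
      have "a \<otimes> r \<otimes> (\<ominus> x) \<in> P" if r: "r \<in> carrier R" for r
      proof -
        have "a \<otimes> r \<otimes> (\<ominus> x) = \<ominus> (a \<otimes> r \<otimes> x)" using a r xc by (simp add: r_minus)
        moreover have "a \<otimes> r \<otimes> x \<in> P" using x r unfolding B_def by blast
        ultimately show ?thesis by (simp add: iP.a_inv_closed)
      qed
      then show "\<ominus> x \<in> B" unfolding B_def using xc by simp
    next
      fix x y assume x: "x \<in> B" and y: "y \<in> B"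
      then have xc: "x \<in> carrier R" and yc: "y \<in> carrier R" unfolding B_def by blast+
      have "a \<otimes> r \<otimes> (x \<oplus> y) \<in> P" if r: "r \<in> carrier R" for r
      proof -
        have "a \<otimes> r \<otimes> (x \<oplus> y) = a \<otimes> r \<otimes> x \<oplus> a \<otimes> r \<otimes> y" using a r xc yc by (simp add: r_distr)
        moreover have "a \<otimes> r \<otimes> x \<in> P" "a \<otimes> r \<otimes> y \<in> P" using x y r unfolding B_def by blast+
        ultimately show ?thesis by (simp add: iP.a_closed)
      qed
      then show "x \<oplus> y \<in> B" unfolding B_def using xc yc by simp
    qed
  next
    fix y x assume y: "y \<in> B" and x: "x \<in> carrier R"
    then have yc: "y \<in> carrier R" unfolding B_def by blast
    have "a \<otimes> r \<otimes> (x \<otimes> y) \<in> P" if r: "r \<in> carrier R" for r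
    proof -
      have "a \<otimes> r \<otimes> (x \<otimes> y) = a \<otimes> (r \<otimes> x) \<otimes> y" using a r x yc by (simp add: m_assoc)
      moreover have "a \<otimes> (r \<otimes> x) \<otimes> y \<in> P" using y r x unfolding B_def by simp
      ultimately show ?thesis by simp
    qed
    then show "x \<otimes> y \<in> B" unfolding B_def using x yc by simp
  next
    fix y x assume y: "y \<in> B" and x: "x \<in> carrier R"
    then have yc: "y \<in> carrier R" unfolding B_def by blast
    have "a \<otimes> r \<otimes> (y \<otimes> x) \<in> P" if r: "r \<in> carrier R" for r
    proof -
      have "a \<otimes> r \<otimes> (y \<otimes> x) = (a \<otimes> r \<otimes> y) \<otimes> x" using a r x yc by (simp add: m_assoc)
      moreover have "a \<otimes> r \<otimes> y \<in> P" using y r unfolding B_def by blast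
      ultimately show ?thesis using x by (simp add: iP.I_r_closed)
    qed
    then show "y \<otimes> x \<in> B" unfolding B_def using x yc by simp
  qed
  have BR: "\<And>y r. y \<in> B \<Longrightarrow> r \<in> carrier R \<Longrightarrow> r \<otimes> y \<in> B"
    by (rule ideal.I_l_closed[OF iB])
  have Bc: "\<And>y. y \<in> B \<Longrightarrow> y \<in> carrier R" unfolding B_def by simp
  have iA: "ideal A R"
  proof (rule idealI)
    show "ring R" by (rule ring_axioms)
    show "subgroup A (add_monoid R)"
    proof (rule add.subgroupI)
      show "A \<subseteq> carrier R" unfolding A_def by blast
      have "\<zero> \<in> A" unfolding A_def using z Bc by simp
      then show "A \<noteq> {}" by blast
    next
      fix x assume x: "x \<in> A"
      then have xc: "x \<in> carrier R" unfolding A_def by blast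
      have "(\<ominus> x) \<otimes> y \<in> P" if y: "y \<in> B" for y
      proof -
        have "(\<ominus> x) \<otimes> y = \<ominus> (x \<otimes> y)" using xc Bc[OF y] by (simp add: l_minus)
        moreover have "x \<otimes> y \<in> P" using x y unfolding A_def by blast
        ultimately show ?thesis by (simp add: iP.a_inv_closed)
      qed
      then show "\<ominus> x \<in> A" unfolding A_def using xc by simp
    next
      fix x z assume x: "x \<in> A" and zz: "z \<in> A"
      then have xc: "x \<in> carrier R" and zc: "z \<in> carrier R" unfolding A_def by blast+
      have "(x \<oplus> z) \<otimes> y \<in> P" if y: "y \<in> B" for y
      proof -
        have "(x \<oplus> z) \<otimes> y = x \<otimes> y \<oplus> z \<otimes> y" using xc zc Bc[OF y] by (simp add: l_distr)
        moreover have "x \<otimes> y \<in> P" "z \<otimes> y \<in> P" using x zz y unfolding A_def by blast+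
        ultimately show ?thesis by (simp add: iP.a_closed)
      qed
      then show "x \<oplus> z \<in> A" unfolding A_def using xc zc by simp
    qed
  next
    fix w x assume w: "w \<in> A" and x: "x \<in> carrier R"
    then have wc: "w \<in> carrier R" unfolding A_def by blast
    have "(x \<otimes> w) \<otimes> y \<in> P" if y: "y \<in> B" for y
    proof -
      have "(x \<otimes> w) \<otimes> y = x \<otimes> (w \<otimes> y)" using x wc Bc[OF y] by (simp add: m_assoc)
      moreover have "w \<otimes> y \<in> P" using w y unfolding A_def by blast
      ultimately show ?thesis using x by (simp add: iP.I_l_closed)
    qed
    then show "x \<otimes> w \<in> A" unfolding A_def using x wc by simp
  next
    fix w x assume w: "w \<in> A" and x: "x \<in> carrier R"
    then have wc: "w \<in> carrier R" unfolding A_def by blast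
    have "(w \<otimes> x) \<otimes> y \<in> P" if y: "y \<in> B" for y
    proof -
      have "(w \<otimes> x) \<otimes> y = w \<otimes> (x \<otimes> y)" using x wc Bc[OF y] by (simp add: m_assoc)
      moreover have "w \<otimes> (x \<otimes> y) \<in> P" using w BR[OF y x] unfolding A_def by blast
      ultimately show ?thesis by simp
    qed
    then show "w \<otimes> x \<in> A" unfolding A_def using x wc by simp
  qed
  have bB: "b \<in> B" unfolding B_def using b h by blast
  have "a \<otimes> y \<in> P" if y: "y \<in> B" for y
  proof -
    have "a \<otimes> y = a \<otimes> \<one> \<otimes> y" using a Bc[OF y] by simp
    moreover have "a \<otimes> \<one> \<otimes> y \<in> P" using y unfolding B_def by blast
    ultimately show ?thesis by simp
  qed
  then have aA: "a \<in> A" unfolding A_def using a by blast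
  have "\<forall>x\<in>A. \<forall>y\<in>B. x \<otimes> y \<in> P" unfolding A_def by blast
  moreover have "\<forall>A B. ideal A R \<longrightarrow> ideal B R \<longrightarrow>
        (\<forall>a\<in>A. \<forall>b\<in>B. a \<otimes> b \<in> P) \<longrightarrow> A \<subseteq> P \<or> B \<subseteq> P"
    using P unfolding nc_prime_ideal_def by (elim conjE)
  ultimately have "A \<subseteq> P \<or> B \<subseteq> P" using iA iB by simp
  then show ?thesis using aA bB by blast
qed

definition lprod :: "('a,'b) ring_scheme \<Rightarrow> 'a list \<Rightarrow> 'a" where
  "lprod R xs = foldr (\<lambda>x y. x \<otimes>\<^bsub>R\<^esub> y) xs \<one>\<^bsub>R\<^esub>"

lemma (in ring) lprod_closed: "set xs \<subseteq> carrier R \<Longrightarrow> lprod R xs \<in> carrier R"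
  by (induct xs) (auto simp: lprod_def)

lemma (in ring) lprod_append:
  "set xs \<subseteq> carrier R \<Longrightarrow> set ys \<subseteq> carrier R \<Longrightarrow> lprod R (xs @ ys) = lprod R xs \<otimes> lprod R ys"
proof (induct xs)
  case Nil then show ?case using lprod_closed by (simp add: lprod_def)
next
  case (Cons a xs)
  then show ?case using lprod_closed[of xs] lprod_closed[of ys]
    by (simp add: lprod_def m_assoc)
qed

lemma (in ring) nilpotent_sub_prime:
  assumes N: "nilpotent_ideal I R" and P: "nc_prime_ideal P R"
  shows "I \<subseteq> P"
proof -
  interpret iI: ideal I R using N unfolding nilpotent_ideal_def by auto
  interpret iP: ideal P R using P unfolding nc_prime_ideal_def by auto
  obtain n where n1: "n \<ge> 1" and nz: "\<And>xs. length xs = n \<Longrightarrow> set xs \<subseteq> I \<Longrightarrow> lprod R xs = \<zero>"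
    using N unfolding nilpotent_ideal_def lprod_def by auto
  have Isub: "I \<subseteq> carrier R" by (rule iI.a_subset)
  have big: "lprod R xs = \<zero>" if "length xs \<ge> n" "set xs \<subseteq> I" for xs
  proof -
    have "xs = take n xs @ drop n xs" by simp
    then have "lprod R xs = lprod R (take n xs) \<otimes> lprod R (drop n xs)"
      by (metis lprod_append Isub that(2) set_take_subset set_drop_subset subset_trans)
    moreover have "lprod R (take n xs) = \<zero>" using that
      by (intro nz) (auto dest: in_set_takeD)
    moreover have "lprod R (drop n xs) \<in> carrier R" using that Isub
      by (meson lprod_closed set_drop_subset subset_trans)
    ultimately show ?thesis by simp
  qed
  have claim: "\<forall>xs. set xs \<subseteq> I \<longrightarrow> length xs \<ge> 1 \<longrightarrow> length xs + k \<ge> n \<longrightarrow> lprod R xs \<in> P" for k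
  proof (induct k)
    case 0 then show ?case using big iP.additive_subgroup_axioms additive_subgroup.zero_closed by fastforce
  next
    case (Suc k)
    show ?case
    proof (intro allI impI)
      fix xs assume xs: "set xs \<subseteq> I" "length xs \<ge> 1" "length xs + Suc k \<ge> n"
      show "lprod R xs \<in> P"
      proof (cases "length xs + k \<ge> n")
        case True then show ?thesis using Suc xs by auto
      next
        case False
        obtain h t where ht: "xs = h # t" using xs(2) by (cases xs) auto
        have hc: "h \<in> carrier R" "set t \<subseteq> carrier R" using ht xs Isub by auto
        have pc: "lprod R xs \<in> carrier R" using xs Isub lprod_closed by blast
        have "lprod R xs \<otimes> r \<otimes> lprod R xs \<in> P" if r: "r \<in> carrier R" for r
        proof -
          define ys where "ys = xs @ (r \<otimes> h) # t"
          have ysI: "set ys \<subseteq> I" unfolding ys_def using xs ht r iI.I_l_closed by auto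
          have "lprod R ((r \<otimes> h) # t) = r \<otimes> lprod R xs"
            using ht hc r lprod_closed[of t] by (simp add: lprod_def m_assoc)
          then have "lprod R ys = lprod R xs \<otimes> (r \<otimes> lprod R xs)"
            unfolding ys_def using lprod_append[of xs "(r \<otimes> h) # t"] ht hc r Isub xs by auto
          then have e: "lprod R ys = lprod R xs \<otimes> r \<otimes> lprod R xs" using pc r by (simp add: m_assoc)
          have "lprod R ys \<in> P" using Suc ysI xs unfolding ys_def by auto
          then show ?thesis using e by simp
        qed
        then show ?thesis using elem_prime[OF P pc pc] by blast
      qed
    qed
  qed
  show ?thesis
  proof
    fix x assume x: "x \<in> I"
    have "lprod R [x] \<in> P" using claim[of n] x by auto
    then show "x \<in> P" using x Isub by (auto simp: lprod_def)
  qed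
qed


lemma (in ring) quot_mem_rep:
  assumes I: "ideal I R" and IP: "I \<subseteq> P" and P: "ideal P R"
    and x: "x \<in> carrier R" and m: "I +> x \<in> (+>) I ` P"
  shows "x \<in> P"
proof -
  interpret iI: ideal I R by (rule I)
  interpret iP: ideal P R by (rule P)
  obtain p where p: "p \<in> P" "I +> x = I +> p" using m by auto
  have "x \<in> I +> x" using x iI.a_rcos_self by blast
  then have "x \<in> I +> p" using p by simp
  then obtain i where i: "i \<in> I" "x = i \<oplus> p" unfolding a_r_coset_def r_coset_def by auto
  then show ?thesis using IP p iP.a_closed by auto
qed

lemma (in ring) quot_prime:
  assumes I: "ideal I R" and IP: "I \<subseteq> P" and P: "nc_prime_ideal P R"
  shows "nc_prime_ideal ((+>) I ` P) (R Quot I)"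
proof -
  interpret iI: ideal I R by (rule I)
  have iP: "ideal P R" using P unfolding nc_prime_ideal_def by (elim conjE)
  have Pne: "P \<noteq> carrier R" using P unfolding nc_prime_ideal_def by (elim conjE)
  have Ppr: "\<forall>A B. ideal A R \<longrightarrow> ideal B R \<longrightarrow>
        (\<forall>a\<in>A. \<forall>b\<in>B. a \<otimes> b \<in> P) \<longrightarrow> A \<subseteq> P \<or> B \<subseteq> P"
    using P unfolding nc_prime_ideal_def by (elim conjE)
  interpret iP: ideal P R by (rule iP)
  interpret h: ring_hom_ring R "R Quot I" "(+>) I" by (rule iI.rcos_ring_hom_ring)
  let ?Q = "R Quot I"
  let ?P' = "(+>) I ` P"
  have rep: "\<And>X. X \<in> carrier ?Q \<Longrightarrow> \<exists>x\<in>carrier R. X = I +> x"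
    unfolding FactRing_def A_RCOSETS_def' by auto
  have mem: "\<And>x. x \<in> carrier R \<Longrightarrow> I +> x \<in> ?P' \<Longrightarrow> x \<in> P"
    using quot_mem_rep[OF I IP iP] by blast
  have i1: "ideal ?P' ?Q" by (rule ring_ideal_imp_quot_ideal[OF I iP])
  have i2: "?P' \<noteq> carrier ?Q"
  proof
    assume "?P' = carrier ?Q"
    then have "I +> \<one> \<in> ?P'" using h.hom_closed[of \<one>] by simp
    then have "\<one> \<in> P" using mem by simp
    then have "P = carrier R" by (rule iP.one_imp_carrier)
    then show False using Pne by simp
  qed
  have i3: "A' \<subseteq> ?P' \<or> B' \<subseteq> ?P'" if A': "ideal A' ?Q" and B': "ideal B' ?Q"
    and AB: "\<forall>a\<in>A'. \<forall>b\<in>B'. a \<otimes>\<^bsub>?Q\<^esub> b \<in> ?P'" for A' B'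
  proof -
    define A where "A = {r \<in> carrier R. I +> r \<in> A'}"
    define B where "B = {r \<in> carrier R. I +> r \<in> B'}"
    have iA: "ideal A R" unfolding A_def by (rule h.ideal_vimage[OF A'])
    have iB: "ideal B R" unfolding B_def by (rule h.ideal_vimage[OF B'])
    have "\<forall>a\<in>A. \<forall>b\<in>B. a \<otimes> b \<in> P"
    proof (intro ballI)
      fix a b assume a: "a \<in> A" and b: "b \<in> B"
      have "I +> (a \<otimes> b) = (I +> a) \<otimes>\<^bsub>?Q\<^esub> (I +> b)"
        using a b unfolding A_def B_def by (simp add: h.hom_mult)
      also have "\<dots> \<in> ?P'" using AB a b unfolding A_def B_def by auto
      finally show "a \<otimes> b \<in> P" using mem a b unfolding A_def B_def by auto
    qed
    then have "A \<subseteq> P \<or> B \<subseteq> P" using Ppr iA iB by simp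
    then show ?thesis
    proof
      assume AP: "A \<subseteq> P"
      have "A' \<subseteq> ?P'"
      proof
        fix X assume X: "X \<in> A'"
        then have "X \<in> carrier ?Q" by (rule ideal.Icarr[OF A'])
        then obtain x where x: "x \<in> carrier R" "X = I +> x" using rep by blast
        then have "x \<in> A" using X unfolding A_def by auto
        then show "X \<in> ?P'" using AP x by auto
      qed
      then show ?thesis by blast
    next
      assume BP: "B \<subseteq> P"
      have "B' \<subseteq> ?P'"
      proof
        fix X assume X: "X \<in> B'"
        then have "X \<in> carrier ?Q" by (rule ideal.Icarr[OF B'])
        then obtain x where x: "x \<in> carrier R" "X = I +> x" using rep by blast
        then have "x \<in> B" using X unfolding B_def by auto
        then show "X \<in> ?P'" using BP x by auto
      qed
      then show ?thesis by blast
    qed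
  qed
  show ?thesis unfolding nc_prime_ideal_def
    apply (intro conjI allI impI)
    using i1 apply assumption
    using i2 apply assumption
    using i3 apply simp
    done
qed


theorem proposition2p6:
  fixes R :: "('a, 'b) ring_scheme" and I :: "'a set"
  assumes "ring R"
    and "ideal I R"
    and "nilpotent_ideal I R"
    and "almost_armendariz (R Quot I)"
  shows "almost_armendariz R"
proof -
  interpret R: UP_ring R "UP R" unfolding UP_ring_def by (rule assms(1))
  interpret iI: ideal I R by (rule assms(2))
  interpret h: ring_hom_ring R "R Quot I" "a_r_coset R I" by (rule iI.rcos_ring_hom_ring)
  let ?Q = "R Quot I"
  interpret Q: UP_ring ?Q "UP ?Q" unfolding UP_ring_def by (rule iI.quotient_is_ring)
  let ?h = "a_r_coset R I"
  have lift: "(\<lambda>n. ?h (f n)) \<in> carrier (UP ?Q)" if f: "f \<in> carrier (UP R)" for f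
  proof -
    have fc: "\<And>n. f n \<in> carrier R" using f by (auto simp: UP_def)
    obtain m where m: "bound \<zero>\<^bsub>R\<^esub> m f" using f by (auto simp: UP_def up_def)
    have "bound \<zero>\<^bsub>?Q\<^esub> m (\<lambda>n. ?h (f n))" using m unfolding bound_def by (simp add: h.hom_zero)
    then show ?thesis using fc h.hom_closed by (auto simp: UP_def intro!: mem_upI)
  qed
  have cf: "\<And>f n. f \<in> carrier (UP R) \<Longrightarrow> coeff (UP R) f n = f n" by (simp add: UP_def)
  have cq: "\<And>f n. f \<in> carrier (UP ?Q) \<Longrightarrow> coeff (UP ?Q) f n = f n" by (simp add: UP_def)
  show ?thesis unfolding almost_armendariz_def
  proof (intro ballI impI allI)
    fix f g i j
    assume f: "f \<in> carrier (UP R)" and g: "g \<in> carrier (UP R)"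
      and fg: "f \<otimes>\<^bsub>UP R\<^esub> g = \<zero>\<^bsub>UP R\<^esub>"
    define F where "F = (\<lambda>n. ?h (f n))"
    define G where "G = (\<lambda>n. ?h (g n))"
    have F: "F \<in> carrier (UP ?Q)" unfolding F_def by (rule lift[OF f])
    have G: "G \<in> carrier (UP ?Q)" unfolding G_def by (rule lift[OF g])
    have fc: "\<And>n. f n \<in> carrier R" using f by (auto simp: UP_def)
    have gc: "\<And>n. g n \<in> carrier R" using g by (auto simp: UP_def)
    have FG: "F \<otimes>\<^bsub>UP ?Q\<^esub> G = \<zero>\<^bsub>UP ?Q\<^esub>"
    proof (rule Q.up_eqI)
      fix n
      have "coeff (UP ?Q) (F \<otimes>\<^bsub>UP ?Q\<^esub> G) n = (\<Oplus>\<^bsub>?Q\<^esub>k \<in> {..n}. F k \<otimes>\<^bsub>?Q\<^esub> G (n-k))"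
        using Q.coeff_mult[OF F G, of n] by (simp add: cq[OF F] cq[OF G])
      also have "\<dots> = ?h (\<Oplus>\<^bsub>R\<^esub>k \<in> {..n}. f k \<otimes>\<^bsub>R\<^esub> g (n-k))"
        using fc gc by (simp add: F_def G_def h.hom_mult comp_def Pi_def)
      also have "(\<Oplus>\<^bsub>R\<^esub>k \<in> {..n}. f k \<otimes>\<^bsub>R\<^esub> g (n-k)) = coeff (UP R) (f \<otimes>\<^bsub>UP R\<^esub> g) n"
        using R.coeff_mult[OF f g, of n] by (simp add: cf[OF f] cf[OF g])
      also have "\<dots> = \<zero>\<^bsub>R\<^esub>" using fg by simp
      finally show "coeff (UP ?Q) (F \<otimes>\<^bsub>UP ?Q\<^esub> G) n = coeff (UP ?Q) \<zero>\<^bsub>UP ?Q\<^esub> n"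
        by (simp add: h.hom_zero)
    qed (use F G in auto)
    have "coeff (UP ?Q) F i \<otimes>\<^bsub>?Q\<^esub> coeff (UP ?Q) G j \<in> prime_radical ?Q"
    proof -
      have "\<forall>f \<in> carrier (UP ?Q). \<forall>g \<in> carrier (UP ?Q).
        f \<otimes>\<^bsub>UP ?Q\<^esub> g = \<zero>\<^bsub>UP ?Q\<^esub> \<longrightarrow>
        (\<forall>i j. coeff (UP ?Q) f i \<otimes>\<^bsub>?Q\<^esub> coeff (UP ?Q) g j \<in> prime_radical ?Q)"
        using assms(4) unfolding almost_armendariz_def .
      note AA = this
      have h1: "F \<otimes>\<^bsub>UP ?Q\<^esub> G = \<zero>\<^bsub>UP ?Q\<^esub> \<longrightarrow>
        (\<forall>i j. coeff (UP ?Q) F i \<otimes>\<^bsub>?Q\<^esub> coeff (UP ?Q) G j \<in> prime_radical ?Q)"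
        by (rule bspec[OF bspec[OF AA F] G])
      have "\<forall>i j. coeff (UP ?Q) F i \<otimes>\<^bsub>?Q\<^esub> coeff (UP ?Q) G j \<in> prime_radical ?Q"
        by (rule mp[OF h1 FG])
      note AB = this
      show ?thesis by (rule AB[rule_format])
    qed
    note cQ = this
    have rad: "?h (f i \<otimes>\<^bsub>R\<^esub> g j) \<in> prime_radical ?Q"
    proof -
      have "coeff (UP ?Q) F i \<otimes>\<^bsub>?Q\<^esub> coeff (UP ?Q) G j = ?h (f i) \<otimes>\<^bsub>?Q\<^esub> ?h (g j)"
        by (simp only: cq[OF F] cq[OF G]) (simp only: F_def G_def)
      also have "\<dots> = ?h (f i \<otimes>\<^bsub>R\<^esub> g j)" by (rule h.hom_mult[symmetric, OF fc gc])
      finally show ?thesis using cQ by simp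
    qed
    show "coeff (UP R) f i \<otimes>\<^bsub>R\<^esub> coeff (UP R) g j \<in> prime_radical R"
      unfolding cf[OF f] cf[OF g] prime_radical_def
    proof (intro CollectI conjI allI impI)
      show "f i \<otimes>\<^bsub>R\<^esub> g j \<in> carrier R" using fc gc by simp
      fix P assume P: "nc_prime_ideal P R"
      have IP: "I \<subseteq> P" using ring.nilpotent_sub_prime[OF assms(1) assms(3) P] .
      have "nc_prime_ideal (?h ` P) ?Q" by (rule ring.quot_prime[OF assms(1) assms(2) IP P])
      then have "?h (f i \<otimes>\<^bsub>R\<^esub> g j) \<in> ?h ` P" using rad unfolding prime_radical_def by blast
      moreover have "ideal P R" using P unfolding nc_prime_ideal_def by blast
      moreover have "f i \<otimes>\<^bsub>R\<^esub> g j \<in> carrier R" using fc gc by simp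
      ultimately show "f i \<otimes>\<^bsub>R\<^esub> g j \<in> P"
        using ring.quot_mem_rep[OF assms(1) assms(2) IP] by blast
    qed
  qed
qed

end
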